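(* Let $R$ be a commutative noetherian ring, let $\mathfrak a$ be an ideal of $R$, let $\mathcal S_1$ be a Serre subcategory of $R$-modules and let $\mathcal S_2$ be any subcategory of $R$-modules containing the zero module. If $\mathcal S_1\mathcal S_2$ is closed under extensions and $(\mathcal S_2\mathcal S_1)_{\mathfrak a}$ is closed under quotients, then $(\mathcal S_2\mathcal S_1)_{\mathfrak a}\subseteq(\mathcal S_1\mathcal S_2)_{\mathfrak a}$. In particular, if $\mathcal S_2\mathcal S_1$ satisfies the condition $C_{\mathfrak a}$, then so does $\mathcal S_1\mathcal S_2$.
   Context: A Serre subcategory is a full subcategory of $R$-modules closed under submodules, quotients and extensions. For subcategories $\mathcal S,\mathcal T$, the extension subcategory $\mathcal S\mathcal T$ consists of all modules $M$ admitting an exact sequence $0\to L\to M\to N\to 0$ with $L\in\mathcal S$, $N\in\mathcal T$; $\mathcal S$ is closed under extensions if $\mathcal S\mathcal S=\mathcal S$. For a subcategory $\mathcal S$ and module $M$, $\mathcal S$ satisfies the condition $C_{\mathfrak a}$ on $M$ if: $\Gamma_{\mathfrak a}(M)=M$ and $(0:_M\mathfrak a)\in\mathcal S$ imply $M\in\mathcal S$. $\mathcal S_{\mathfrak a}$ denotes the largest subcategory of modules on all of whose objects $\mathcal S$ satisfies the condition $C_{\mathfrak a}$ (i.e. the class of all modules $M$ on which $\mathcal S$ satisfies $C_{\mathfrak a}$). $\mathcal S$ satisfies the condition $C_{\mathfrak a}$ if $\mathcal S_{\mathfrak a}$ is the whole category of $R$-modules. *)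

theory Defs
  imports "HOL-Algebra.Module" "HOL-Algebra.Ideal_Product" "HOL-Algebra.Ring_Divisibility"
begin

text \<open>R-modules are HOL-Algebra modules whose carriers live in a fixed (arbitrary) type 'm.
  A "subcategory" is a predicate on such modules.\<close>

type_synonym ('r, 'm) modclass = "('r, 'm) module \<Rightarrow> bool"

definition mod_hom :: "'r ring \<Rightarrow> ('r, 'm) module \<Rightarrow> ('r, 'n) module \<Rightarrow> ('m \<Rightarrow> 'n) \<Rightarrow> bool" where
  "mod_hom R M N f \<longleftrightarrow>
     f \<in> carrier M \<rightarrow> carrier N \<and>
     (\<forall>x\<in>carrier M. \<forall>y\<in>carrier M. f (x \<oplus>\<^bsub>M\<^esub> y) = f x \<oplus>\<^bsub>N\<^esub> f y) \<and>
     (\<forall>r\<in>carrier R. \<forall>x\<in>carrier M. f (r \<odot>\<^bsub>M\<^esub> x) = r \<odot>\<^bsub>N\<^esub> f x)"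

definition subcat :: "'r ring \<Rightarrow> ('r, 'm) modclass \<Rightarrow> bool" where
  "subcat R S \<longleftrightarrow> (\<forall>M. S M \<longrightarrow> module R M)"

definition iso_closed :: "'r ring \<Rightarrow> ('r, 'm) modclass \<Rightarrow> bool" where
  "iso_closed R S \<longleftrightarrow> (\<forall>M N f. module R M \<and> module R N \<and> mod_hom R M N f \<and>
      bij_betw f (carrier M) (carrier N) \<and> S M \<longrightarrow> S N)"

definition closed_sub :: "'r ring \<Rightarrow> ('r, 'm) modclass \<Rightarrow> bool" where
  "closed_sub R S \<longleftrightarrow> (\<forall>M N f. module R M \<and> module R N \<and> mod_hom R N M f \<and>
      inj_on f (carrier N) \<and> S M \<longrightarrow> S N)"

definition closed_quot :: "'r ring \<Rightarrow> ('r, 'm) modclass \<Rightarrow> bool" where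
  "closed_quot R S \<longleftrightarrow> (\<forall>M N g. module R M \<and> module R N \<and> mod_hom R M N g \<and>
      g ` carrier M = carrier N \<and> S M \<longrightarrow> S N)"

definition ext_cat :: "'r ring \<Rightarrow> ('r, 'm) modclass \<Rightarrow> ('r, 'm) modclass \<Rightarrow> ('r, 'm) modclass" where
  "ext_cat R S T M \<longleftrightarrow> module R M \<and>
     (\<exists>L N f g. module R L \<and> module R N \<and> mod_hom R L M f \<and> inj_on f (carrier L) \<and>
        mod_hom R M N g \<and> g ` carrier M = carrier N \<and>
        f ` carrier L = {x \<in> carrier M. g x = \<zero>\<^bsub>N\<^esub>} \<and> S L \<and> T N)"

definition closed_ext :: "'r ring \<Rightarrow> ('r, 'm) modclass \<Rightarrow> bool" where
  "closed_ext R S \<longleftrightarrow> ext_cat R S S = S"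

definition serre :: "'r ring \<Rightarrow> ('r, 'm) modclass \<Rightarrow> bool" where
  "serre R S \<longleftrightarrow> subcat R S \<and> closed_sub R S \<and> closed_quot R S \<and> closed_ext R S"

definition contains_zero :: "'r ring \<Rightarrow> ('r, 'm) modclass \<Rightarrow> bool" where
  "contains_zero R S \<longleftrightarrow> (\<forall>M. module R M \<and> carrier M = {\<zero>\<^bsub>M\<^esub>} \<longrightarrow> S M)"

definition ideal_pow :: "'r ring \<Rightarrow> 'r set \<Rightarrow> nat \<Rightarrow> 'r set" where
  "ideal_pow R a n = ((\<lambda>J. ideal_prod R a J) ^^ n) (carrier R)"

definition torsion :: "'r ring \<Rightarrow> 'r set \<Rightarrow> ('r, 'm) module \<Rightarrow> 'm set" where
  "torsion R a M = {x \<in> carrier M. \<exists>n. \<forall>r \<in> ideal_pow R a n. r \<odot>\<^bsub>M\<^esub> x = \<zero>\<^bsub>M\<^esub>}"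

definition annih_sub :: "'r ring \<Rightarrow> 'r set \<Rightarrow> ('r, 'm) module \<Rightarrow> ('r, 'm) module" where
  "annih_sub R a M = M\<lparr>carrier := {x \<in> carrier M. \<forall>r \<in> a. r \<odot>\<^bsub>M\<^esub> x = \<zero>\<^bsub>M\<^esub>}\<rparr>"

definition cond_C :: "'r ring \<Rightarrow> 'r set \<Rightarrow> ('r, 'm) modclass \<Rightarrow> ('r, 'm) module \<Rightarrow> bool" where
  "cond_C R a S M \<longleftrightarrow> (torsion R a M = carrier M \<and> S (annih_sub R a M) \<longrightarrow> S M)"

definition S_sub :: "'r ring \<Rightarrow> 'r set \<Rightarrow> ('r, 'm) modclass \<Rightarrow> ('r, 'm) modclass" where
  "S_sub R a S M \<longleftrightarrow> module R M \<and> cond_C R a S M"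

definition satisfies_C :: "'r ring \<Rightarrow> 'r set \<Rightarrow> ('r, 'm) modclass \<Rightarrow> bool" where
  "satisfies_C R a S \<longleftrightarrow> (\<forall>M. module R M \<longrightarrow> cond_C R a S M)"

end

theory Submission
  imports Defs
begin

lemma (in module) sub_props:
  assumes "submodule K R M"
  shows "K \<subseteq> carrier M" "\<zero>\<^bsub>M\<^esub> \<in> K" "\<And>x y. x\<in>K \<Longrightarrow> y\<in>K \<Longrightarrow> x\<oplus>\<^bsub>M\<^esub>y \<in> K"
    "\<And>x. x\<in>K \<Longrightarrow> \<ominus>\<^bsub>M\<^esub>x \<in> K" "\<And>r x. r\<in>carrier R \<Longrightarrow> x\<in>K \<Longrightarrow> r\<odot>\<^bsub>M\<^esub>x\<in>K"
proof -
  show 1: "K \<subseteq> carrier M" using submoduleE(1)[OF assms] .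
  show 2: "\<And>x y. x\<in>K \<Longrightarrow> y\<in>K \<Longrightarrow> x\<oplus>\<^bsub>M\<^esub>y \<in> K" using submoduleE(5)[OF assms] .
  show 3: "\<And>x. x\<in>K \<Longrightarrow> \<ominus>\<^bsub>M\<^esub>x \<in> K" using submoduleE(3)[OF assms] .
  show "\<And>r x. r\<in>carrier R \<Longrightarrow> x\<in>K \<Longrightarrow> r\<odot>\<^bsub>M\<^esub>x\<in>K" using submoduleE(4)[OF assms] .
  obtain x where "x \<in> K" using submoduleE(2)[OF assms] by auto
  then have "x \<oplus>\<^bsub>M\<^esub> \<ominus>\<^bsub>M\<^esub>x \<in> K" using 2 3 by auto
  then show "\<zero>\<^bsub>M\<^esub> \<in> K" using 1 \<open>x\<in>K\<close> by (simp add: subsetD r_neg)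
qed

definition rep :: "('r,'m,'e) module_scheme \<Rightarrow> 'm set \<Rightarrow> 'm \<Rightarrow> 'm" where
  "rep M K x = (if x \<in> K then \<zero>\<^bsub>M\<^esub> else (SOME y. \<exists>k\<in>K. y = x \<oplus>\<^bsub>M\<^esub> k))"

definition Qs :: "('r,'m,'e) module_scheme \<Rightarrow> 'm set \<Rightarrow> 'm set \<Rightarrow> ('r,'m,'e) module_scheme" where
  "Qs M K T = M\<lparr>carrier := rep M K ` T, add := \<lambda>x y. rep M K (x \<oplus>\<^bsub>M\<^esub> y),
      smult := \<lambda>r x. rep M K (r \<odot>\<^bsub>M\<^esub> x)\<rparr>"

context module begin

lemma rep_ex:
  assumes K: "submodule K R M" and x: "x \<in> carrier M"
  shows "\<exists>k\<in>K. rep M K x = x \<oplus>\<^bsub>M\<^esub> k"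
proof (cases "x \<in> K")
  case True
  then show ?thesis using sub_props[OF K] x by (auto simp: rep_def r_neg intro!: bexI[of _ "\<ominus>\<^bsub>M\<^esub>x"])
next
  case False
  have "\<exists>y. \<exists>k\<in>K. y = x \<oplus>\<^bsub>M\<^esub> k" using sub_props(2)[OF K] by blast
  then have "\<exists>k\<in>K. (SOME y. \<exists>k\<in>K. y = x \<oplus>\<^bsub>M\<^esub> k) = x \<oplus>\<^bsub>M\<^esub> k" by (rule someI_ex)
  then show ?thesis using False by (simp add: rep_def)
qed

lemma rep_carrier:
  assumes K: "submodule K R M" and x: "x \<in> carrier M"
  shows "rep M K x \<in> carrier M"
  using rep_ex[OF K x] sub_props(1)[OF K] x by auto

lemma rep_cong:
  assumes K: "submodule K R M" and x: "x \<in> carrier M" and k: "k \<in> K"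
  shows "rep M K (x \<oplus>\<^bsub>M\<^esub> k) = rep M K x"
proof -
  have kc: "k \<in> carrier M" using k sub_props(1)[OF K] by auto
  show ?thesis
  proof (cases "x \<in> K")
    case True
    then show ?thesis using sub_props[OF K] k by (simp add: rep_def)
  next
    case False
    have nK: "x \<oplus>\<^bsub>M\<^esub> k \<notin> K"
    proof
      assume "x \<oplus>\<^bsub>M\<^esub> k \<in> K"
      then have "(x \<oplus>\<^bsub>M\<^esub> k) \<oplus>\<^bsub>M\<^esub> \<ominus>\<^bsub>M\<^esub>k \<in> K" using sub_props[OF K] k by auto
      also have "(x \<oplus>\<^bsub>M\<^esub> k) \<oplus>\<^bsub>M\<^esub> \<ominus>\<^bsub>M\<^esub>k = x" using x kc by (simp add: a_assoc r_neg)
      finally show False using False by simp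
    qed
    have "(\<lambda>y. \<exists>k'\<in>K. y = (x \<oplus>\<^bsub>M\<^esub> k) \<oplus>\<^bsub>M\<^esub> k') = (\<lambda>y. \<exists>k'\<in>K. y = x \<oplus>\<^bsub>M\<^esub> k')"
    proof (intro ext iffI)
      fix y assume "\<exists>k'\<in>K. y = x \<oplus>\<^bsub>M\<^esub> k \<oplus>\<^bsub>M\<^esub> k'"
      then obtain k' where "k' \<in> K" "y = x \<oplus>\<^bsub>M\<^esub> k \<oplus>\<^bsub>M\<^esub> k'" by auto
      then show "\<exists>k'\<in>K. y = x \<oplus>\<^bsub>M\<^esub> k'" using sub_props[OF K] k x kc
        by (intro bexI[of _ "k \<oplus>\<^bsub>M\<^esub> k'"]) (auto simp: a_assoc subsetD)
    next
      fix y assume "\<exists>k'\<in>K. y = x \<oplus>\<^bsub>M\<^esub> k'"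
      then obtain k' where k': "k' \<in> K" "y = x \<oplus>\<^bsub>M\<^esub> k'" by auto
      have k'c: "k' \<in> carrier M" using k' sub_props(1)[OF K] by auto
      have e1: "k \<oplus>\<^bsub>M\<^esub> (\<ominus>\<^bsub>M\<^esub>k \<oplus>\<^bsub>M\<^esub> k') = k'" using kc k'c
        by (simp add: a_assoc[symmetric] r_neg)
      have "y = x \<oplus>\<^bsub>M\<^esub> k \<oplus>\<^bsub>M\<^esub> (\<ominus>\<^bsub>M\<^esub>k \<oplus>\<^bsub>M\<^esub> k')" using k' kc k'c x e1
        by (simp add: a_assoc)
      then show "\<exists>k''\<in>K. y = x \<oplus>\<^bsub>M\<^esub> k \<oplus>\<^bsub>M\<^esub> k''" using sub_props[OF K] k k' by blast
    qed
    then show ?thesis using False nK by (simp add: rep_def)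
  qed
qed

lemma rep_rep:
  assumes K: "submodule K R M" and x: "x \<in> carrier M"
  shows "rep M K (rep M K x) = rep M K x"
  using rep_ex[OF K x] rep_cong[OF K x] by auto

lemma rep_zero: "rep M K \<zero>\<^bsub>M\<^esub> = \<zero>\<^bsub>M\<^esub>" if "submodule K R M"
  using sub_props(2)[OF that] by (simp add: rep_def)

lemma rep_zero_iff:
  assumes K: "submodule K R M" and x: "x \<in> carrier M"
  shows "rep M K x = \<zero>\<^bsub>M\<^esub> \<longleftrightarrow> x \<in> K"
proof
  assume "x \<in> K" then show "rep M K x = \<zero>\<^bsub>M\<^esub>" by (simp add: rep_def)
next
  assume h: "rep M K x = \<zero>\<^bsub>M\<^esub>"
  obtain k where k: "k \<in> K" "rep M K x = x \<oplus>\<^bsub>M\<^esub> k" using rep_ex[OF K x] by auto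
  have kc: "k \<in> carrier M" using k sub_props(1)[OF K] by auto
  have "x = \<ominus>\<^bsub>M\<^esub>k" using h k kc x
    by (metis l_neg a_assoc r_zero a_inv_closed add.l_inv_ex add.inv_closed l_zero
        minus_equality)
  then show "x \<in> K" using sub_props(4)[OF K] k by simp
qed

lemma rep_eqD:
  assumes K: "submodule K R M" and x: "x \<in> carrier M" and y: "y \<in> carrier M"
    and e: "rep M K x = rep M K y"
  shows "\<exists>k\<in>K. x = y \<oplus>\<^bsub>M\<^esub> k"
proof -
  obtain k1 where k1: "k1 \<in> K" "rep M K x = x \<oplus>\<^bsub>M\<^esub> k1" using rep_ex[OF K x] by auto
  obtain k2 where k2: "k2 \<in> K" "rep M K y = y \<oplus>\<^bsub>M\<^esub> k2" using rep_ex[OF K y] by auto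
  have c: "k1 \<in> carrier M" "k2 \<in> carrier M" using k1 k2 sub_props(1)[OF K] by auto
  have "x = y \<oplus>\<^bsub>M\<^esub> (k2 \<oplus>\<^bsub>M\<^esub> \<ominus>\<^bsub>M\<^esub>k1)"
  proof -
    have "x \<oplus>\<^bsub>M\<^esub> k1 = y \<oplus>\<^bsub>M\<^esub> k2" using e k1 k2 by simp
    then have "x \<oplus>\<^bsub>M\<^esub> k1 \<oplus>\<^bsub>M\<^esub> \<ominus>\<^bsub>M\<^esub>k1 = y \<oplus>\<^bsub>M\<^esub> k2 \<oplus>\<^bsub>M\<^esub> \<ominus>\<^bsub>M\<^esub>k1" by simp
    then show ?thesis using c x y by (simp add: a_assoc r_neg)
  qed
  then show ?thesis using sub_props[OF K] k1 k2 by blast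
qed

lemma rep_eq_iff:
  assumes K: "submodule K R M" and x: "x \<in> carrier M" and y: "y \<in> carrier M"
  shows "rep M K x = rep M K y \<longleftrightarrow> (\<exists>k\<in>K. x = y \<oplus>\<^bsub>M\<^esub> k)"
  using rep_eqD[OF K x y] rep_cong[OF K y] by auto

lemma rep_addL:
  assumes K: "submodule K R M" and u: "u \<in> carrier M" and v: "v \<in> carrier M"
  shows "rep M K (rep M K u \<oplus>\<^bsub>M\<^esub> v) = rep M K (u \<oplus>\<^bsub>M\<^esub> v)"
proof -
  obtain k where k: "k \<in> K" "rep M K u = u \<oplus>\<^bsub>M\<^esub> k" using rep_ex[OF K u] by auto
  have kc: "k \<in> carrier M" using k sub_props(1)[OF K] by auto
  have "rep M K u \<oplus>\<^bsub>M\<^esub> v = (u \<oplus>\<^bsub>M\<^esub> v) \<oplus>\<^bsub>M\<^esub> k" using k kc u v by (simp add: a_ac)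
  then show ?thesis using rep_cong[OF K _ k(1)] u v by simp
qed

lemma rep_addR:
  assumes K: "submodule K R M" and u: "u \<in> carrier M" and v: "v \<in> carrier M"
  shows "rep M K (u \<oplus>\<^bsub>M\<^esub> rep M K v) = rep M K (u \<oplus>\<^bsub>M\<^esub> v)"
  using rep_addL[OF K v u] u v rep_carrier[OF K v] by (simp add: a_comm)

lemma rep_smult:
  assumes K: "submodule K R M" and r: "r \<in> carrier R" and u: "u \<in> carrier M"
  shows "rep M K (r \<odot>\<^bsub>M\<^esub> rep M K u) = rep M K (r \<odot>\<^bsub>M\<^esub> u)"
proof -
  obtain k where k: "k \<in> K" "rep M K u = u \<oplus>\<^bsub>M\<^esub> k" using rep_ex[OF K u] by auto
  have kc: "k \<in> carrier M" using k sub_props(1)[OF K] by auto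
  have "r \<odot>\<^bsub>M\<^esub> rep M K u = (r \<odot>\<^bsub>M\<^esub> u) \<oplus>\<^bsub>M\<^esub> (r \<odot>\<^bsub>M\<^esub> k)" using k kc u r by (simp add: smult_r_distr)
  then show ?thesis using rep_cong[OF K _ sub_props(5)[OF K r k(1)]] u r by simp
qed

lemma rep_in_T:
  assumes K: "submodule K R M" and T: "submodule T R M" and KT: "K \<subseteq> T" and x: "x \<in> T"
  shows "rep M K x \<in> T"
proof -
  have xc: "x \<in> carrier M" using x sub_props(1)[OF T] by auto
  obtain k where k: "k \<in> K" "rep M K x = x \<oplus>\<^bsub>M\<^esub> k" using rep_ex[OF K xc] by auto
  then show ?thesis using sub_props(3)[OF T x] KT by auto
qed


lemma Qs_simps:
  "carrier (Qs M K T) = rep M K ` T"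
  "x \<oplus>\<^bsub>Qs M K T\<^esub> y = rep M K (x \<oplus>\<^bsub>M\<^esub> y)"
  "r \<odot>\<^bsub>Qs M K T\<^esub> x = rep M K (r \<odot>\<^bsub>M\<^esub> x)"
  "\<zero>\<^bsub>Qs M K T\<^esub> = \<zero>\<^bsub>M\<^esub>"
  by (simp_all add: Qs_def)

lemma is_module: "module R M" by (rule module_axioms)

lemma Qs_module:
  assumes K: "submodule K R M" and T: "submodule T R M" and KT: "K \<subseteq> T"
  shows "module R (Qs M K T)"
proof -
  have Tc: "\<And>u. u \<in> T \<Longrightarrow> u \<in> carrier M" using sub_props(1)[OF T] by auto
  note ss = rep_addL[OF K] rep_addR[OF K] rep_carrier[OF K] rep_smult[OF K] Qs_simps
  have cl: "\<And>u v. u \<in> T \<Longrightarrow> v \<in> T \<Longrightarrow> rep M K (rep M K u \<oplus>\<^bsub>M\<^esub> rep M K v) \<in> rep M K ` T"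
    using ss Tc sub_props(3)[OF T] by auto
  have cls: "\<And>r u. r \<in> carrier R \<Longrightarrow> u \<in> T \<Longrightarrow> rep M K (r \<odot>\<^bsub>M\<^esub> rep M K u) \<in> rep M K ` T"
    using ss Tc sub_props(5)[OF T] by auto
  show ?thesis
  proof (rule moduleI)
    show "cring R" using is_module by (simp add: module_def)
    show "abelian_group (Qs M K T)"
    proof (rule abelian_groupI)
      show "\<And>x y. x \<in> carrier (Qs M K T) \<Longrightarrow> y \<in> carrier (Qs M K T) \<Longrightarrow> x \<oplus>\<^bsub>Qs M K T\<^esub> y \<in> carrier (Qs M K T)"
        using cl by (auto simp: Qs_simps)
      show "\<zero>\<^bsub>Qs M K T\<^esub> \<in> carrier (Qs M K T)"
        using sub_props(2)[OF T] rep_zero[OF K] by (auto simp: Qs_simps intro!: image_eqI[of _ _ "\<zero>\<^bsub>M\<^esub>"])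
      show "\<And>x y z. x \<in> carrier (Qs M K T) \<Longrightarrow> y \<in> carrier (Qs M K T) \<Longrightarrow> z \<in> carrier (Qs M K T) \<Longrightarrow>
         x \<oplus>\<^bsub>Qs M K T\<^esub> y \<oplus>\<^bsub>Qs M K T\<^esub> z = x \<oplus>\<^bsub>Qs M K T\<^esub> (y \<oplus>\<^bsub>Qs M K T\<^esub> z)"
        using Tc by (auto simp: ss a_assoc)
      show "\<And>x y. x \<in> carrier (Qs M K T) \<Longrightarrow> y \<in> carrier (Qs M K T) \<Longrightarrow>
         x \<oplus>\<^bsub>Qs M K T\<^esub> y = y \<oplus>\<^bsub>Qs M K T\<^esub> x"
        using Tc by (auto simp: ss a_comm)
      show "\<And>x. x \<in> carrier (Qs M K T) \<Longrightarrow> \<zero>\<^bsub>Qs M K T\<^esub> \<oplus>\<^bsub>Qs M K T\<^esub> x = x"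
        using Tc by (auto simp: ss rep_rep[OF K])
      show "\<And>x. x \<in> carrier (Qs M K T) \<Longrightarrow> \<exists>y\<in>carrier (Qs M K T). y \<oplus>\<^bsub>Qs M K T\<^esub> x = \<zero>\<^bsub>Qs M K T\<^esub>"
      proof -
        fix x assume "x \<in> carrier (Qs M K T)"
        then obtain u where u: "u \<in> T" "x = rep M K u" by (auto simp: Qs_simps)
        have "rep M K (\<ominus>\<^bsub>M\<^esub> u) \<in> carrier (Qs M K T)" using sub_props(4)[OF T u(1)] by (simp add: Qs_simps)
        moreover have "rep M K (\<ominus>\<^bsub>M\<^esub> u) \<oplus>\<^bsub>Qs M K T\<^esub> x = \<zero>\<^bsub>Qs M K T\<^esub>"
          using u Tc[OF u(1)] by (simp add: ss l_neg rep_zero[OF K])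
        ultimately show "\<exists>y\<in>carrier (Qs M K T). y \<oplus>\<^bsub>Qs M K T\<^esub> x = \<zero>\<^bsub>Qs M K T\<^esub>" by blast
      qed
    qed
    show "\<And>a x. a \<in> carrier R \<Longrightarrow> x \<in> carrier (Qs M K T) \<Longrightarrow> a \<odot>\<^bsub>Qs M K T\<^esub> x \<in> carrier (Qs M K T)"
      using cls rep_rep[OF K] Tc by (auto simp: Qs_simps)
    show "\<And>a b x. a \<in> carrier R \<Longrightarrow> b \<in> carrier R \<Longrightarrow> x \<in> carrier (Qs M K T) \<Longrightarrow>
       (a \<oplus>\<^bsub>R\<^esub> b) \<odot>\<^bsub>Qs M K T\<^esub> x = a \<odot>\<^bsub>Qs M K T\<^esub> x \<oplus>\<^bsub>Qs M K T\<^esub> b \<odot>\<^bsub>Qs M K T\<^esub> x"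
    proof -
      fix a b x assume ab: "a \<in> carrier R" "b \<in> carrier R" and "x \<in> carrier (Qs M K T)"
      then obtain u where u: "u \<in> T" "x = rep M K u" by (auto simp: Qs_simps)
      have uc: "u \<in> carrier M" "rep M K u \<in> carrier M" using Tc[OF u(1)] rep_carrier[OF K] by auto
      have "rep M K (a \<odot>\<^bsub>M\<^esub> rep M K u \<oplus>\<^bsub>M\<^esub> b \<odot>\<^bsub>M\<^esub> rep M K u) = rep M K ((a \<oplus>\<^bsub>R\<^esub> b) \<odot>\<^bsub>M\<^esub> rep M K u)"
        using ab uc by (simp add: smult_l_distr)
      also have "\<dots> = rep M K ((a \<oplus>\<^bsub>R\<^esub> b) \<odot>\<^bsub>M\<^esub> u)" using ab uc by (simp add: ss)
      also have "\<dots> = rep M K (a \<odot>\<^bsub>M\<^esub> u \<oplus>\<^bsub>M\<^esub> b \<odot>\<^bsub>M\<^esub> u)" using ab uc by (simp add: smult_l_distr)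
      finally show "(a \<oplus>\<^bsub>R\<^esub> b) \<odot>\<^bsub>Qs M K T\<^esub> x = a \<odot>\<^bsub>Qs M K T\<^esub> x \<oplus>\<^bsub>Qs M K T\<^esub> b \<odot>\<^bsub>Qs M K T\<^esub> x"
        using ab uc u by (simp add: ss smult_l_distr)
    qed
    show "\<And>a x y. a \<in> carrier R \<Longrightarrow> x \<in> carrier (Qs M K T) \<Longrightarrow> y \<in> carrier (Qs M K T) \<Longrightarrow>
       a \<odot>\<^bsub>Qs M K T\<^esub> (x \<oplus>\<^bsub>Qs M K T\<^esub> y) = a \<odot>\<^bsub>Qs M K T\<^esub> x \<oplus>\<^bsub>Qs M K T\<^esub> a \<odot>\<^bsub>Qs M K T\<^esub> y"
      using Tc by (auto simp: ss smult_r_distr)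
    show "\<And>a b x. a \<in> carrier R \<Longrightarrow> b \<in> carrier R \<Longrightarrow> x \<in> carrier (Qs M K T) \<Longrightarrow>
       (a \<otimes>\<^bsub>R\<^esub> b) \<odot>\<^bsub>Qs M K T\<^esub> x = a \<odot>\<^bsub>Qs M K T\<^esub> (b \<odot>\<^bsub>Qs M K T\<^esub> x)"
      using Tc by (auto simp: ss smult_assoc1[symmetric])
    show "\<And>x. x \<in> carrier (Qs M K T) \<Longrightarrow> \<one>\<^bsub>R\<^esub> \<odot>\<^bsub>Qs M K T\<^esub> x = x"
      using Tc by (auto simp: ss rep_rep[OF K])
  qed
qed


lemma rep_rep2:
  assumes K: "submodule K R M" and K': "submodule K' R M" and KK: "K \<subseteq> K'" and x: "x \<in> carrier M"
  shows "rep M K' (rep M K x) = rep M K' x"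
proof -
  obtain k where "k \<in> K" "rep M K x = x \<oplus>\<^bsub>M\<^esub> k" using rep_ex[OF K x] by auto
  then show ?thesis using rep_cong[OF K' x] KK by auto
qed

end

lemma Qs_ext:
  fixes M :: "('r,'m) module"
  assumes M: "module R M" and K: "submodule K R M" and K': "submodule K' R M" and T: "submodule T R M"
    and KK: "K \<subseteq> K'" and KT: "K' \<subseteq> T" and S: "S (Qs M K K')" and S': "S' (Qs M K' T)"
  shows "ext_cat R S S' (Qs M K T)"
proof -
  interpret module R M by fact
  have Tc: "\<And>u. u \<in> T \<Longrightarrow> u \<in> carrier M" using sub_props(1)[OF T] by auto
  have K'c: "\<And>u. u \<in> K' \<Longrightarrow> u \<in> carrier M" using sub_props(1)[OF K'] by auto
  note ss = rep_addL[OF K] rep_addR[OF K] rep_carrier[OF K] rep_smult[OF K] Qs_simps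
     rep_addL[OF K'] rep_addR[OF K'] rep_carrier[OF K'] rep_smult[OF K'] rep_rep2[OF K K' KK]
  show ?thesis unfolding ext_cat_def
  proof (intro conjI exI)
    show "module R (Qs M K T)" using Qs_module[OF K T] KK KT by auto
    show "module R (Qs M K K')" using Qs_module[OF K K' KK] .
    show "module R (Qs M K' T)" using Qs_module[OF K' T KT] .
    show "mod_hom R (Qs M K K') (Qs M K T) id" using KT by (auto simp: mod_hom_def Qs_simps)
    show "inj_on id (carrier (Qs M K K'))" by simp
    show "mod_hom R (Qs M K T) (Qs M K' T) (rep M K')"
      unfolding mod_hom_def using Tc by (auto simp: ss)
    show "rep M K' ` carrier (Qs M K T) = carrier (Qs M K' T)"
      using Tc by (auto simp: ss image_iff)
    show "id ` carrier (Qs M K K') = {x \<in> carrier (Qs M K T). rep M K' x = \<zero>\<^bsub>Qs M K' T\<^esub>}"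
      using Tc K'c KT by (auto simp: ss rep_zero_iff[OF K'] image_iff)
    show "S (Qs M K K')" by fact
    show "S' (Qs M K' T)" by fact
  qed
qed


lemma hom_zero:
  assumes A: "module R A" and B: "module R B" and f: "mod_hom R A B f"
  shows "f \<zero>\<^bsub>A\<^esub> = \<zero>\<^bsub>B\<^esub>"
proof -
  interpret A: module R A by fact
  interpret B: module R B by fact
  have "f \<zero>\<^bsub>A\<^esub> = f (\<zero>\<^bsub>R\<^esub> \<odot>\<^bsub>A\<^esub> \<zero>\<^bsub>A\<^esub>)" by simp
  also have "\<dots> = \<zero>\<^bsub>R\<^esub> \<odot>\<^bsub>B\<^esub> f \<zero>\<^bsub>A\<^esub>" using f A.M.zero_closed A.R.zero_closed unfolding mod_hom_def by blast
  also have "\<dots> = \<zero>\<^bsub>B\<^esub>" using f by (simp add: mod_hom_def Pi_iff)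
  finally show ?thesis .
qed

lemma hom_neg:
  assumes A: "module R A" and B: "module R B" and f: "mod_hom R A B f" and x: "x \<in> carrier A"
  shows "f (\<ominus>\<^bsub>A\<^esub> x) = \<ominus>\<^bsub>B\<^esub> f x"
proof -
  interpret A: module R A by fact
  interpret B: module R B by fact
  have fx: "f x \<in> carrier B" using f x by (auto simp: mod_hom_def)
  have "f (\<ominus>\<^bsub>A\<^esub> x) = f ((\<ominus>\<^bsub>R\<^esub> \<one>\<^bsub>R\<^esub>) \<odot>\<^bsub>A\<^esub> x)" using x by (simp add: A.smult_l_minus)
  also have "\<dots> = (\<ominus>\<^bsub>R\<^esub> \<one>\<^bsub>R\<^esub>) \<odot>\<^bsub>B\<^esub> f x" using f x by (simp add: mod_hom_def)
  also have "\<dots> = \<ominus>\<^bsub>B\<^esub> f x" using fx by (simp add: B.smult_l_minus)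
  finally show ?thesis .
qed

lemma hom_image_sub:
  assumes A: "module R A" and B: "module R B" and f: "mod_hom R A B f"
  shows "submodule (f ` carrier A) R B"
proof -
  interpret A: module R A by fact
  interpret B: module R B by fact
  show ?thesis
  proof (rule B.submoduleI)
    show "f ` carrier A \<subseteq> carrier B" using f by (auto simp: mod_hom_def)
    show "\<zero>\<^bsub>B\<^esub> \<in> f ` carrier A" using hom_zero[OF A B f] A.M.zero_closed by (metis image_eqI)
    show "\<And>a. a \<in> f ` carrier A \<Longrightarrow> \<ominus>\<^bsub>B\<^esub> a \<in> f ` carrier A"
    proof -
      fix a assume "a \<in> f ` carrier A"
      then obtain x where x: "x \<in> carrier A" "a = f x" by auto
      then have "\<ominus>\<^bsub>B\<^esub> a = f (\<ominus>\<^bsub>A\<^esub> x)" using hom_neg[OF A B f x(1)] by simp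
      then show "\<ominus>\<^bsub>B\<^esub> a \<in> f ` carrier A" using x A.M.a_inv_closed by blast
    qed
    show "\<And>a b. a \<in> f ` carrier A \<Longrightarrow> b \<in> f ` carrier A \<Longrightarrow> a \<oplus>\<^bsub>B\<^esub> b \<in> f ` carrier A"
    proof -
      fix a b assume "a \<in> f ` carrier A" "b \<in> f ` carrier A"
      then obtain x y where x: "x \<in> carrier A" "a = f x" "y \<in> carrier A" "b = f y" by auto
      then have "a \<oplus>\<^bsub>B\<^esub> b = f (x \<oplus>\<^bsub>A\<^esub> y)" using f by (simp add: mod_hom_def)
      then show "a \<oplus>\<^bsub>B\<^esub> b \<in> f ` carrier A" using x A.M.a_closed by blast
    qed
    show "\<And>r b. r \<in> carrier R \<Longrightarrow> b \<in> f ` carrier A \<Longrightarrow> r \<odot>\<^bsub>B\<^esub> b \<in> f ` carrier A"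
    proof -
      fix r b assume r: "r \<in> carrier R" and "b \<in> f ` carrier A"
      then obtain y where x: "y \<in> carrier A" "b = f y" by auto
      then have "r \<odot>\<^bsub>B\<^esub> b = f (r \<odot>\<^bsub>A\<^esub> y)" using f r by (simp add: mod_hom_def)
      then show "r \<odot>\<^bsub>B\<^esub> b \<in> f ` carrier A" using x r A.smult_closed by blast
    qed
  qed
qed

lemma hom_inv:
  assumes A: "module R A" and B: "module R B" and f: "mod_hom R A B f"
    and b: "bij_betw f (carrier A) (carrier B)"
  shows "mod_hom R B A (inv_into (carrier A) f) \<and> bij_betw (inv_into (carrier A) f) (carrier B) (carrier A)"
proof -
  interpret A: module R A by fact
  interpret B: module R B by fact
  let ?g = "inv_into (carrier A) f"
  have inj: "inj_on f (carrier A)" and sur: "f ` carrier A = carrier B" using b by (auto simp: bij_betw_def)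
  have g1: "\<And>y. y \<in> carrier B \<Longrightarrow> ?g y \<in> carrier A" using sur by (metis inv_into_into)
  have g2: "\<And>y. y \<in> carrier B \<Longrightarrow> f (?g y) = y" using sur by (simp add: f_inv_into_f)
  have g3: "\<And>x. x \<in> carrier A \<Longrightarrow> ?g (f x) = x" using inj by simp
  have fa: "\<And>x y. x \<in> carrier A \<Longrightarrow> y \<in> carrier A \<Longrightarrow> f (x \<oplus>\<^bsub>A\<^esub> y) = f x \<oplus>\<^bsub>B\<^esub> f y"
    and fs: "\<And>r x. r \<in> carrier R \<Longrightarrow> x \<in> carrier A \<Longrightarrow> f (r \<odot>\<^bsub>A\<^esub> x) = r \<odot>\<^bsub>B\<^esub> f x"
    using f by (auto simp: mod_hom_def)
  have "mod_hom R B A ?g" unfolding mod_hom_def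
  proof (intro conjI ballI)
    show "?g \<in> carrier B \<rightarrow> carrier A" using g1 by auto
    fix x y assume x: "x \<in> carrier B" and y: "y \<in> carrier B"
    have "?g (x \<oplus>\<^bsub>B\<^esub> y) = ?g (f (?g x) \<oplus>\<^bsub>B\<^esub> f (?g y))" using g2 x y by simp
    also have "\<dots> = ?g (f (?g x \<oplus>\<^bsub>A\<^esub> ?g y))" using fa[OF g1[OF x] g1[OF y]] by simp
    also have "\<dots> = ?g x \<oplus>\<^bsub>A\<^esub> ?g y" using g3 g1[OF x] g1[OF y] A.M.a_closed by blast
    finally show "?g (x \<oplus>\<^bsub>B\<^esub> y) = ?g x \<oplus>\<^bsub>A\<^esub> ?g y" .
  next
    fix r x assume r: "r \<in> carrier R" and x: "x \<in> carrier B"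
    have "?g (r \<odot>\<^bsub>B\<^esub> x) = ?g (r \<odot>\<^bsub>B\<^esub> f (?g x))" using g2 x by simp
    also have "\<dots> = ?g (f (r \<odot>\<^bsub>A\<^esub> ?g x))" using fs[OF r g1[OF x]] by simp
    also have "\<dots> = r \<odot>\<^bsub>A\<^esub> ?g x" using g3 g1[OF x] r A.smult_closed by blast
    finally show "?g (r \<odot>\<^bsub>B\<^esub> x) = r \<odot>\<^bsub>A\<^esub> ?g x" .
  qed
  moreover have "bij_betw ?g (carrier B) (carrier A)" using b by (rule bij_betw_inv_into)
  ultimately show ?thesis by simp
qed

lemma ext_catI:
  assumes "module R M" "module R L" "module R N" "mod_hom R L M f" "inj_on f (carrier L)"
    "mod_hom R M N g" "g ` carrier M = carrier N" "f ` carrier L = {x \<in> carrier M. g x = \<zero>\<^bsub>N\<^esub>}"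
    "S L" "T N"
  shows "ext_cat R S T M"
  using assms unfolding ext_cat_def by blast

lemma zero_sub_module:
  assumes X: "module R X"
  shows "module R (X\<lparr>carrier := {\<zero>\<^bsub>X\<^esub>}\<rparr>)"
proof -
  interpret X: module R X by fact
  have "submodule {\<zero>\<^bsub>X\<^esub>} R X" by (rule X.submoduleI) auto
  then show ?thesis using submodule.submodule_is_module[OF _ X] by blast
qed

lemma zero_in_serre:
  assumes S: "serre R S" and L: "S L" and Z: "module R Z" and Zc: "carrier Z = {\<zero>\<^bsub>Z\<^esub>}"
  shows "S Z"
proof -
  have Lm: "module R L" using S L by (auto simp: serre_def subcat_def)
  interpret L: module R L by fact
  have "mod_hom R Z L (\<lambda>_. \<zero>\<^bsub>L\<^esub>)" by (auto simp: mod_hom_def)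
  moreover have "inj_on (\<lambda>_. \<zero>\<^bsub>L\<^esub>) (carrier Z)" using Zc by (simp add: inj_on_def)
  ultimately show ?thesis using S L Lm Z by (auto simp: serre_def closed_sub_def)
qed

lemma S1_in_ext:
  assumes L: "module R L" and S: "S L" and Z: "contains_zero R S'"
  shows "ext_cat R S S' L"
proof -
  interpret L: module R L by fact
  show ?thesis
  proof (rule ext_catI[where L=L and f=id and N="L\<lparr>carrier := {\<zero>\<^bsub>L\<^esub>}\<rparr>" and g="\<lambda>_. \<zero>\<^bsub>L\<^esub>"])
    show "module R L" by fact
    show "module R L" by fact
    show "module R (L\<lparr>carrier := {\<zero>\<^bsub>L\<^esub>}\<rparr>)" by (rule zero_sub_module[OF L])
    show "mod_hom R L L id" by (auto simp: mod_hom_def)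
    show "inj_on id (carrier L)" by simp
    show "mod_hom R L (L\<lparr>carrier := {\<zero>\<^bsub>L\<^esub>}\<rparr>) (\<lambda>_. \<zero>\<^bsub>L\<^esub>)" by (auto simp: mod_hom_def)
    show "(\<lambda>_. \<zero>\<^bsub>L\<^esub>) ` carrier L = carrier (L\<lparr>carrier := {\<zero>\<^bsub>L\<^esub>}\<rparr>)" by auto
    show "id ` carrier L = {x \<in> carrier L. \<zero>\<^bsub>L\<^esub> = \<zero>\<^bsub>L\<lparr>carrier := {\<zero>\<^bsub>L\<^esub>}\<rparr>\<^esub>}" by auto
    show "S L" by fact
    show "S' (L\<lparr>carrier := {\<zero>\<^bsub>L\<^esub>}\<rparr>)" using Z zero_sub_module[OF L] by (auto simp: contains_zero_def)
  qed
qed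

lemma S2_in_ext:
  assumes X: "module R X" and S': "S' X" and Z: "\<And>Z. module R Z \<Longrightarrow> carrier Z = {\<zero>\<^bsub>Z\<^esub>} \<Longrightarrow> S Z"
  shows "ext_cat R S S' X"
proof -
  interpret X: module R X by fact
  show ?thesis
  proof (rule ext_catI[where N=X and f=id and L="X\<lparr>carrier := {\<zero>\<^bsub>X\<^esub>}\<rparr>" and g=id])
    show "module R X" by fact
    show "module R X" by fact
    show "module R (X\<lparr>carrier := {\<zero>\<^bsub>X\<^esub>}\<rparr>)" by (rule zero_sub_module[OF X])
    show "mod_hom R (X\<lparr>carrier := {\<zero>\<^bsub>X\<^esub>}\<rparr>) X id" by (auto simp: mod_hom_def)
    show "inj_on id (carrier (X\<lparr>carrier := {\<zero>\<^bsub>X\<^esub>}\<rparr>))" by simp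
    show "mod_hom R X X id" by (auto simp: mod_hom_def)
    show "id ` carrier X = carrier X" by auto
    show "id ` carrier (X\<lparr>carrier := {\<zero>\<^bsub>X\<^esub>}\<rparr>) = {x \<in> carrier X. id x = \<zero>\<^bsub>X\<^esub>}" by auto
    show "S (X\<lparr>carrier := {\<zero>\<^bsub>X\<^esub>}\<rparr>)" using Z zero_sub_module[OF X] by auto
    show "S' X" by fact
  qed
qed


lemma Qs_iso:
  fixes M :: "('r,'m) module" and N :: "('r,'n) module"
  assumes M: "module R M" and K: "submodule K R M" and C: "submodule C R M" and KC: "K \<subseteq> C"
    and N: "module R N" and g: "mod_hom R (M\<lparr>carrier := C\<rparr>) N g" and gs: "g ` C = carrier N"
    and ker: "K = {x \<in> C. g x = \<zero>\<^bsub>N\<^esub>}"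
  shows "mod_hom R (Qs M K C) N g \<and> bij_betw g (carrier (Qs M K C)) (carrier N)"
proof -
  interpret module R M by fact
  interpret N: module R N by fact
  have Cc: "\<And>u. u \<in> C \<Longrightarrow> u \<in> carrier M" using sub_props(1)[OF C] by auto
  have gC: "\<And>x. x \<in> C \<Longrightarrow> g x \<in> carrier N" using g by (auto simp: mod_hom_def)
  have ga: "\<And>x y. x \<in> C \<Longrightarrow> y \<in> C \<Longrightarrow> g (x \<oplus>\<^bsub>M\<^esub> y) = g x \<oplus>\<^bsub>N\<^esub> g y"
    and gsm: "\<And>r x. r \<in> carrier R \<Longrightarrow> x \<in> C \<Longrightarrow> g (r \<odot>\<^bsub>M\<^esub> x) = r \<odot>\<^bsub>N\<^esub> g x"
    using g by (auto simp: mod_hom_def)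
  have gk: "\<And>x k. x \<in> C \<Longrightarrow> k \<in> K \<Longrightarrow> g (x \<oplus>\<^bsub>M\<^esub> k) = g x"
  proof -
    fix x k assume x: "x \<in> C" and k: "k \<in> K"
    have "g (x \<oplus>\<^bsub>M\<^esub> k) = g x \<oplus>\<^bsub>N\<^esub> g k" using ga x k KC by auto
    also have "\<dots> = g x" using k ker gC[OF x] by auto
    finally show "g (x \<oplus>\<^bsub>M\<^esub> k) = g x" .
  qed
  have grep: "\<And>x. x \<in> C \<Longrightarrow> g (rep M K x) = g x"
    using rep_ex[OF K] Cc gk by metis
  have repC: "\<And>x. x \<in> C \<Longrightarrow> rep M K x \<in> C" using rep_in_T[OF K C KC] .
  have hom: "mod_hom R (Qs M K C) N g"
    unfolding mod_hom_def
  proof (intro conjI ballI)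
    show "g \<in> carrier (Qs M K C) \<rightarrow> carrier N" using gC repC by (auto simp: Qs_simps)
    fix x y assume "x \<in> carrier (Qs M K C)" "y \<in> carrier (Qs M K C)"
    then have x: "x \<in> C" and y: "y \<in> C" using repC by (auto simp: Qs_simps)
    show "g (x \<oplus>\<^bsub>Qs M K C\<^esub> y) = g x \<oplus>\<^bsub>N\<^esub> g y"
      using grep ga x y sub_props(3)[OF C x y] by (simp add: Qs_simps)
  next
    fix r x assume r: "r \<in> carrier R" and "x \<in> carrier (Qs M K C)"
    then have x: "x \<in> C" using repC by (auto simp: Qs_simps)
    show "g (r \<odot>\<^bsub>Qs M K C\<^esub> x) = r \<odot>\<^bsub>N\<^esub> g x"
      using grep gsm r x sub_props(5)[OF C r x] by (simp add: Qs_simps)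
  qed
  have inj: "inj_on g (carrier (Qs M K C))"
  proof (rule inj_onI)
    fix x y assume "x \<in> carrier (Qs M K C)" "y \<in> carrier (Qs M K C)" and e: "g x = g y"
    then obtain u v where uv: "u \<in> C" "v \<in> C" "x = rep M K u" "y = rep M K v" by (auto simp: Qs_simps)
    have e2: "g u = g v" using e uv grep by simp
    let ?k = "\<ominus>\<^bsub>M\<^esub> v \<oplus>\<^bsub>M\<^esub> u"
    have nv: "\<ominus>\<^bsub>M\<^esub> v = (\<ominus>\<^bsub>R\<^esub> \<one>\<^bsub>R\<^esub>) \<odot>\<^bsub>M\<^esub> v" using Cc[OF uv(2)] by (simp add: smult_l_minus)
    have nvC: "\<ominus>\<^bsub>M\<^esub> v \<in> C" using sub_props(4)[OF C uv(2)] .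
    have kC: "?k \<in> C" using sub_props(3)[OF C nvC uv(1)] .
    have "g ?k = g (\<ominus>\<^bsub>M\<^esub> v) \<oplus>\<^bsub>N\<^esub> g u" using ga[OF nvC uv(1)] .
    also have "g (\<ominus>\<^bsub>M\<^esub> v) = \<ominus>\<^bsub>N\<^esub> g v" using nv gsm[of "\<ominus>\<^bsub>R\<^esub> \<one>\<^bsub>R\<^esub>" v] uv(2) gC[OF uv(2)]
      by (simp add: N.smult_l_minus)
    finally have "g ?k = \<zero>\<^bsub>N\<^esub>" using e2 gC[OF uv(2)] by (simp add: N.l_neg)
    then have kK: "?k \<in> K" using ker kC by auto
    have "u = v \<oplus>\<^bsub>M\<^esub> ?k" using Cc uv by (simp add: a_assoc[symmetric] r_neg)
    then show "x = y" using uv rep_cong[OF K Cc[OF uv(2)] kK] by simp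
  qed
  have sur: "g ` carrier (Qs M K C) = carrier N"
  proof -
    have "g ` carrier (Qs M K C) = (\<lambda>x. g (rep M K x)) ` C" by (auto simp: Qs_simps)
    also have "\<dots> = g ` C" using grep by (auto simp: image_iff)
    finally show ?thesis using gs by simp
  qed
  show ?thesis using hom inj sur by (simp add: bij_betw_def)
qed


lemma D_sub:
  fixes M :: "('r,'m) module"
  assumes M: "module R M" and T: "submodule T R M" and F: "F \<subseteq> carrier R"
  shows "submodule {m \<in> T. \<forall>s\<in>F. s \<odot>\<^bsub>M\<^esub> m = \<zero>\<^bsub>M\<^esub>} R M"
proof -
  interpret module R M by fact
  have Tc: "\<And>u. u \<in> T \<Longrightarrow> u \<in> carrier M" using sub_props(1)[OF T] by auto
  show ?thesis
  proof (rule submoduleI)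
    show "{m \<in> T. \<forall>s\<in>F. s \<odot>\<^bsub>M\<^esub> m = \<zero>\<^bsub>M\<^esub>} \<subseteq> carrier M" using Tc by auto
    show "\<zero>\<^bsub>M\<^esub> \<in> {m \<in> T. \<forall>s\<in>F. s \<odot>\<^bsub>M\<^esub> m = \<zero>\<^bsub>M\<^esub>}" using sub_props(2)[OF T] F by auto
    show "\<And>a. a \<in> {m \<in> T. \<forall>s\<in>F. s \<odot>\<^bsub>M\<^esub> m = \<zero>\<^bsub>M\<^esub>} \<Longrightarrow> \<ominus>\<^bsub>M\<^esub> a \<in> {m \<in> T. \<forall>s\<in>F. s \<odot>\<^bsub>M\<^esub> m = \<zero>\<^bsub>M\<^esub>}"
      using sub_props(4)[OF T] Tc F by (auto simp: smult_r_minus)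
    show "\<And>a b. a \<in> {m \<in> T. \<forall>s\<in>F. s \<odot>\<^bsub>M\<^esub> m = \<zero>\<^bsub>M\<^esub>} \<Longrightarrow> b \<in> {m \<in> T. \<forall>s\<in>F. s \<odot>\<^bsub>M\<^esub> m = \<zero>\<^bsub>M\<^esub>} \<Longrightarrow> a \<oplus>\<^bsub>M\<^esub> b \<in> {m \<in> T. \<forall>s\<in>F. s \<odot>\<^bsub>M\<^esub> m = \<zero>\<^bsub>M\<^esub>}"
      using sub_props(3)[OF T] Tc F by (auto simp: smult_r_distr subsetD)
    show "\<And>a x. a \<in> carrier R \<Longrightarrow> x \<in> {m \<in> T. \<forall>s\<in>F. s \<odot>\<^bsub>M\<^esub> m = \<zero>\<^bsub>M\<^esub>} \<Longrightarrow> a \<odot>\<^bsub>M\<^esub> x \<in> {m \<in> T. \<forall>s\<in>F. s \<odot>\<^bsub>M\<^esub> m = \<zero>\<^bsub>M\<^esub>}"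
    proof -
      fix a x assume a: "a \<in> carrier R" and x: "x \<in> {m \<in> T. \<forall>s\<in>F. s \<odot>\<^bsub>M\<^esub> m = \<zero>\<^bsub>M\<^esub>}"
      have "\<forall>s\<in>F. s \<odot>\<^bsub>M\<^esub> (a \<odot>\<^bsub>M\<^esub> x) = \<zero>\<^bsub>M\<^esub>"
      proof
        fix s assume s: "s \<in> F"
        have sc: "s \<in> carrier R" using s F by auto
        have "s \<odot>\<^bsub>M\<^esub> (a \<odot>\<^bsub>M\<^esub> x) = (s \<otimes>\<^bsub>R\<^esub> a) \<odot>\<^bsub>M\<^esub> x" using sc a x Tc by (simp add: smult_assoc1)
        also have "\<dots> = (a \<otimes>\<^bsub>R\<^esub> s) \<odot>\<^bsub>M\<^esub> x" using sc a by (simp add: m_comm)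
        also have "\<dots> = \<zero>\<^bsub>M\<^esub>" using sc a x Tc s by (simp add: smult_assoc1)
        finally show "s \<odot>\<^bsub>M\<^esub> (a \<odot>\<^bsub>M\<^esub> x) = \<zero>\<^bsub>M\<^esub>" .
      qed
      then show "a \<odot>\<^bsub>M\<^esub> x \<in> {m \<in> T. \<forall>s\<in>F. s \<odot>\<^bsub>M\<^esub> m = \<zero>\<^bsub>M\<^esub>}" using sub_props(5)[OF T a] x by auto
    qed
  qed
qed

lemma filt:
  fixes M :: "('r,'m) module"
  assumes M: "module R M" and S: "serre R S1" and P0: "S1 P0"
    and K: "submodule K R M" and SK: "S1 (M\<lparr>carrier := K\<rparr>)"
    and T: "submodule T R M" and G: "G \<subseteq> carrier R" and hyp: "\<forall>r\<in>G. \<forall>m\<in>T. r \<odot>\<^bsub>M\<^esub> m \<in> K"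
    and fin: "finite F" and FG: "F \<subseteq> G"
  shows "S1 (Qs M {m \<in> T. \<forall>s\<in>F. s \<odot>\<^bsub>M\<^esub> m = \<zero>\<^bsub>M\<^esub>} T)"
  using fin FG
proof (induction F rule: finite_induct)
  case empty
  interpret module R M by fact
  have Tc: "\<And>u. u \<in> T \<Longrightarrow> u \<in> carrier M" using sub_props(1)[OF T] by auto
  have e: "{m \<in> T. \<forall>s\<in>{}. s \<odot>\<^bsub>M\<^esub> m = \<zero>\<^bsub>M\<^esub>} = T" by auto
  have "carrier (Qs M T T) = {\<zero>\<^bsub>Qs M T T\<^esub>}"
    using rep_zero[OF T] rep_zero_iff[OF T] Tc sub_props(2)[OF T] by (auto simp: Qs_simps image_iff rep_zero[OF T] intro!: bexI[of _ "\<zero>\<^bsub>M\<^esub>"])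
  moreover have "module R (Qs M T T)" using Qs_module[OF T T] by simp
  ultimately show ?case using zero_in_serre[OF S P0] e by simp
next
  case (insert s F)
  interpret module R M by fact
  have Tc: "\<And>u. u \<in> T \<Longrightarrow> u \<in> carrier M" using sub_props(1)[OF T] by auto
  have sc: "s \<in> carrier R" and sG: "s \<in> G" using insert G by auto
  define D1 where "D1 = {m \<in> T. \<forall>s\<in>F. s \<odot>\<^bsub>M\<^esub> m = \<zero>\<^bsub>M\<^esub>}"
  define D2 where "D2 = {m \<in> T. \<forall>s'\<in>insert s F. s' \<odot>\<^bsub>M\<^esub> m = \<zero>\<^bsub>M\<^esub>}"
  have D1s: "submodule D1 R M" unfolding D1_def using D_sub[OF M T] insert G by auto
  have D2s: "submodule D2 R M" unfolding D2_def using D_sub[OF M T, of "insert s F"] insert G by auto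
  have D21: "D2 \<subseteq> D1" and D1T: "D1 \<subseteq> T" unfolding D1_def D2_def by auto
  have IH: "S1 (Qs M D1 T)" using insert unfolding D1_def by auto
  have D1c: "\<And>u. u \<in> D1 \<Longrightarrow> u \<in> carrier M" using D1T Tc by auto
  have srep: "\<And>z. z \<in> carrier M \<Longrightarrow> s \<odot>\<^bsub>M\<^esub> rep M D2 z = s \<odot>\<^bsub>M\<^esub> z"
  proof -
    fix z assume z: "z \<in> carrier M"
    obtain k where k: "k \<in> D2" "rep M D2 z = z \<oplus>\<^bsub>M\<^esub> k" using rep_ex[OF D2s z] by auto
    have "k \<in> carrier M" "s \<odot>\<^bsub>M\<^esub> k = \<zero>\<^bsub>M\<^esub>" using k D2_def Tc by auto
    then show "s \<odot>\<^bsub>M\<^esub> rep M D2 z = s \<odot>\<^bsub>M\<^esub> z" using k z sc by (simp add: smult_r_distr)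
  qed
  have repD1: "\<And>x. x \<in> D1 \<Longrightarrow> rep M D2 x \<in> D1" using rep_in_T[OF D2s D1s D21] .
  have Km: "module R (M\<lparr>carrier := K\<rparr>)" using submodule.submodule_is_module[OF K M] .
  have Qm: "module R (Qs M D2 D1)" using Qs_module[OF D2s D1s D21] .
  have hom: "mod_hom R (Qs M D2 D1) (M\<lparr>carrier := K\<rparr>) (\<lambda>x. s \<odot>\<^bsub>M\<^esub> x)"
    unfolding mod_hom_def
  proof (intro conjI ballI)
    show "(\<lambda>x. s \<odot>\<^bsub>M\<^esub> x) \<in> carrier (Qs M D2 D1) \<rightarrow> carrier (M\<lparr>carrier := K\<rparr>)"
      using hyp sG repD1 D1T by (auto simp: Qs_simps)
    fix x y assume "x \<in> carrier (Qs M D2 D1)" "y \<in> carrier (Qs M D2 D1)"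
    then have x: "x \<in> D1" and y: "y \<in> D1" using repD1 by (auto simp: Qs_simps)
    show "s \<odot>\<^bsub>M\<^esub> (x \<oplus>\<^bsub>Qs M D2 D1\<^esub> y) = s \<odot>\<^bsub>M\<^esub> x \<oplus>\<^bsub>M\<lparr>carrier := K\<rparr>\<^esub> s \<odot>\<^bsub>M\<^esub> y"
      using srep x y D1c sc by (simp add: Qs_simps smult_r_distr)
  next
    fix r x assume r: "r \<in> carrier R" and "x \<in> carrier (Qs M D2 D1)"
    then have x: "x \<in> D1" using repD1 by (auto simp: Qs_simps)
    have "s \<odot>\<^bsub>M\<^esub> (r \<odot>\<^bsub>M\<^esub> x) = (s \<otimes>\<^bsub>R\<^esub> r) \<odot>\<^bsub>M\<^esub> x" using sc r x D1c by (simp add: smult_assoc1)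
    also have "\<dots> = (r \<otimes>\<^bsub>R\<^esub> s) \<odot>\<^bsub>M\<^esub> x" using sc r by (simp add: m_comm)
    also have "\<dots> = r \<odot>\<^bsub>M\<^esub> (s \<odot>\<^bsub>M\<^esub> x)" using sc r x D1c by (simp add: smult_assoc1)
    finally show "s \<odot>\<^bsub>M\<^esub> (r \<odot>\<^bsub>Qs M D2 D1\<^esub> x) = r \<odot>\<^bsub>M\<lparr>carrier := K\<rparr>\<^esub> (s \<odot>\<^bsub>M\<^esub> x)"
      using srep x D1c r by (simp add: Qs_simps)
  qed
  have inj: "inj_on (\<lambda>x. s \<odot>\<^bsub>M\<^esub> x) (carrier (Qs M D2 D1))"
  proof (rule inj_onI)
    fix x y assume "x \<in> carrier (Qs M D2 D1)" "y \<in> carrier (Qs M D2 D1)" and e: "s \<odot>\<^bsub>M\<^esub> x = s \<odot>\<^bsub>M\<^esub> y"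
    then obtain u v where uv: "u \<in> D1" "v \<in> D1" "x = rep M D2 u" "y = rep M D2 v" by (auto simp: Qs_simps)
    have uc: "u \<in> carrier M" "v \<in> carrier M" using uv D1c by auto
    have e2: "s \<odot>\<^bsub>M\<^esub> u = s \<odot>\<^bsub>M\<^esub> v" using e uv srep uc by simp
    let ?k = "\<ominus>\<^bsub>M\<^esub> v \<oplus>\<^bsub>M\<^esub> u"
    have kD1: "?k \<in> D1" using sub_props(3)[OF D1s sub_props(4)[OF D1s uv(2)] uv(1)] .
    have "s \<odot>\<^bsub>M\<^esub> ?k = \<ominus>\<^bsub>M\<^esub> (s \<odot>\<^bsub>M\<^esub> v) \<oplus>\<^bsub>M\<^esub> s \<odot>\<^bsub>M\<^esub> u"
      using uc sc by (simp add: smult_r_distr smult_r_minus)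
    also have "\<dots> = \<zero>\<^bsub>M\<^esub>" using e2 uc sc by (simp add: l_neg)
    finally have "?k \<in> D2" using kD1 unfolding D1_def D2_def by auto
    moreover have "u = v \<oplus>\<^bsub>M\<^esub> ?k" using uc by (simp add: a_assoc[symmetric] r_neg)
    ultimately show "x = y" using uv rep_cong[OF D2s uc(2)] by metis
  qed
  have S1a: "S1 (Qs M D2 D1)"
    using S Km Qm hom inj SK unfolding serre_def closed_sub_def by blast
  have "ext_cat R S1 S1 (Qs M D2 T)" using Qs_ext[OF M D2s D1s T D21 D1T, of S1 S1] S1a IH by blast
  then have "S1 (Qs M D2 T)" using S unfolding serre_def closed_ext_def by metis
  then show ?case unfolding D2_def .
qed


lemma ann_ideal:
  fixes M :: "('r,'m) module"
  assumes M: "module R M" and x: "x \<in> carrier M"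
  shows "ideal {r \<in> carrier R. r \<odot>\<^bsub>M\<^esub> x = \<zero>\<^bsub>M\<^esub>} R"
proof -
  interpret module R M by fact
  show ?thesis
  proof (rule idealI)
    show "ring R" by (rule R.ring_axioms)
    show "subgroup {r \<in> carrier R. r \<odot>\<^bsub>M\<^esub> x = \<zero>\<^bsub>M\<^esub>} (add_monoid R)"
    proof (rule R.add.subgroupI)
      show "{r \<in> carrier R. r \<odot>\<^bsub>M\<^esub> x = \<zero>\<^bsub>M\<^esub>} \<subseteq> carrier R" by auto
      show "{r \<in> carrier R. r \<odot>\<^bsub>M\<^esub> x = \<zero>\<^bsub>M\<^esub>} \<noteq> {}" using x by (auto intro!: exI[of _ "\<zero>\<^bsub>R\<^esub>"])
      show "\<And>a. a \<in> {r \<in> carrier R. r \<odot>\<^bsub>M\<^esub> x = \<zero>\<^bsub>M\<^esub>} \<Longrightarrow> \<ominus>\<^bsub>R\<^esub> a \<in> {r \<in> carrier R. r \<odot>\<^bsub>M\<^esub> x = \<zero>\<^bsub>M\<^esub>}"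
        using x by (auto simp: smult_l_minus)
      show "\<And>a b. a \<in> {r \<in> carrier R. r \<odot>\<^bsub>M\<^esub> x = \<zero>\<^bsub>M\<^esub>} \<Longrightarrow> b \<in> {r \<in> carrier R. r \<odot>\<^bsub>M\<^esub> x = \<zero>\<^bsub>M\<^esub>} \<Longrightarrow> a \<oplus>\<^bsub>R\<^esub> b \<in> {r \<in> carrier R. r \<odot>\<^bsub>M\<^esub> x = \<zero>\<^bsub>M\<^esub>}"
        using x by (auto simp: smult_l_distr)
    qed
    show "\<And>a y. a \<in> {r \<in> carrier R. r \<odot>\<^bsub>M\<^esub> x = \<zero>\<^bsub>M\<^esub>} \<Longrightarrow> y \<in> carrier R \<Longrightarrow> y \<otimes>\<^bsub>R\<^esub> a \<in> {r \<in> carrier R. r \<odot>\<^bsub>M\<^esub> x = \<zero>\<^bsub>M\<^esub>}"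
      using x by (auto simp: smult_assoc1)
    show "\<And>a y. a \<in> {r \<in> carrier R. r \<odot>\<^bsub>M\<^esub> x = \<zero>\<^bsub>M\<^esub>} \<Longrightarrow> y \<in> carrier R \<Longrightarrow> a \<otimes>\<^bsub>R\<^esub> y \<in> {r \<in> carrier R. r \<odot>\<^bsub>M\<^esub> x = \<zero>\<^bsub>M\<^esub>}"
    proof -
      fix a y assume a: "a \<in> {r \<in> carrier R. r \<odot>\<^bsub>M\<^esub> x = \<zero>\<^bsub>M\<^esub>}" and y: "y \<in> carrier R"
      have "(a \<otimes>\<^bsub>R\<^esub> y) \<odot>\<^bsub>M\<^esub> x = (y \<otimes>\<^bsub>R\<^esub> a) \<odot>\<^bsub>M\<^esub> x" using a y by (simp add: m_comm)
      also have "\<dots> = \<zero>\<^bsub>M\<^esub>" using a y x by (simp add: smult_assoc1)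
      finally show "a \<otimes>\<^bsub>R\<^esub> y \<in> {r \<in> carrier R. r \<odot>\<^bsub>M\<^esub> x = \<zero>\<^bsub>M\<^esub>}" using a y by simp
    qed
  qed
qed

lemma ann_gen:
  fixes M :: "('r,'m) module"
  assumes M: "module R M" and x: "x \<in> carrier M" and G: "G \<subseteq> carrier R"
    and h: "\<forall>s\<in>G. s \<odot>\<^bsub>M\<^esub> x = \<zero>\<^bsub>M\<^esub>" and r: "r \<in> Idl\<^bsub>R\<^esub> G"
  shows "r \<odot>\<^bsub>M\<^esub> x = \<zero>\<^bsub>M\<^esub>"
proof -
  interpret module R M by fact
  have "Idl\<^bsub>R\<^esub> G \<subseteq> {r \<in> carrier R. r \<odot>\<^bsub>M\<^esub> x = \<zero>\<^bsub>M\<^esub>}"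
    using R.genideal_minimal[OF ann_ideal[OF M x]] h G by auto
  then show ?thesis using r by auto
qed

lemma ideal_pow_ideal:
  assumes R: "cring R" and a: "ideal a R"
  shows "ideal (ideal_pow R a n) R"
proof (induction n)
  interpret cring R by fact
  case 0
  then show ?case by (simp add: ideal_pow_def oneideal)
next
  interpret cring R by fact
  case (Suc n)
  then show ?case using ideal_prod_is_ideal[OF a] by (simp add: ideal_pow_def)
qed


lemma T_sub:
  fixes M :: "('r,'m) module"
  assumes M: "module R M" and K: "submodule K R M" and a: "a \<subseteq> carrier R"
  shows "submodule {m \<in> carrier M. \<forall>r\<in>a. r \<odot>\<^bsub>M\<^esub> m \<in> K} R M"
proof -
  interpret module R M by fact
  show ?thesis
  proof (rule submoduleI)
    show "{m \<in> carrier M. \<forall>r\<in>a. r \<odot>\<^bsub>M\<^esub> m \<in> K} \<subseteq> carrier M" by auto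
    show "\<zero>\<^bsub>M\<^esub> \<in> {m \<in> carrier M. \<forall>r\<in>a. r \<odot>\<^bsub>M\<^esub> m \<in> K}" using sub_props(2)[OF K] a by auto
    show "\<And>x. x \<in> {m \<in> carrier M. \<forall>r\<in>a. r \<odot>\<^bsub>M\<^esub> m \<in> K} \<Longrightarrow> \<ominus>\<^bsub>M\<^esub> x \<in> {m \<in> carrier M. \<forall>r\<in>a. r \<odot>\<^bsub>M\<^esub> m \<in> K}"
      using sub_props(4)[OF K] a by (auto simp: smult_r_minus subsetD)
    show "\<And>x y. x \<in> {m \<in> carrier M. \<forall>r\<in>a. r \<odot>\<^bsub>M\<^esub> m \<in> K} \<Longrightarrow> y \<in> {m \<in> carrier M. \<forall>r\<in>a. r \<odot>\<^bsub>M\<^esub> m \<in> K} \<Longrightarrow> x \<oplus>\<^bsub>M\<^esub> y \<in> {m \<in> carrier M. \<forall>r\<in>a. r \<odot>\<^bsub>M\<^esub> m \<in> K}"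
      using sub_props(3)[OF K] a by (auto simp: smult_r_distr subsetD)
    show "\<And>b x. b \<in> carrier R \<Longrightarrow> x \<in> {m \<in> carrier M. \<forall>r\<in>a. r \<odot>\<^bsub>M\<^esub> m \<in> K} \<Longrightarrow> b \<odot>\<^bsub>M\<^esub> x \<in> {m \<in> carrier M. \<forall>r\<in>a. r \<odot>\<^bsub>M\<^esub> m \<in> K}"
    proof -
      fix b x assume b: "b \<in> carrier R" and x: "x \<in> {m \<in> carrier M. \<forall>r\<in>a. r \<odot>\<^bsub>M\<^esub> m \<in> K}"
      have "\<forall>r\<in>a. r \<odot>\<^bsub>M\<^esub> (b \<odot>\<^bsub>M\<^esub> x) \<in> K"
      proof
        fix r assume r: "r \<in> a"
        have rc: "r \<in> carrier R" using r a by auto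
        have "r \<odot>\<^bsub>M\<^esub> (b \<odot>\<^bsub>M\<^esub> x) = (r \<otimes>\<^bsub>R\<^esub> b) \<odot>\<^bsub>M\<^esub> x" using rc b x by (simp add: smult_assoc1)
        also have "\<dots> = (b \<otimes>\<^bsub>R\<^esub> r) \<odot>\<^bsub>M\<^esub> x" using rc b by (simp add: m_comm)
        also have "\<dots> = b \<odot>\<^bsub>M\<^esub> (r \<odot>\<^bsub>M\<^esub> x)" using rc b x by (simp add: smult_assoc1)
        finally show "r \<odot>\<^bsub>M\<^esub> (b \<odot>\<^bsub>M\<^esub> x) \<in> K" using sub_props(5)[OF K b] x r by auto
      qed
      then show "b \<odot>\<^bsub>M\<^esub> x \<in> {m \<in> carrier M. \<forall>r\<in>a. r \<odot>\<^bsub>M\<^esub> m \<in> K}" using b x by auto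
    qed
  qed
qed

theorem proposition3p3:
  fixes R :: "'r ring" and a :: "'r set"
    and S1 S2 :: "('r, 'm) modclass"
  assumes "cring R" and "noetherian_ring R" and "ideal a R"
    and "serre R S1"
    and "subcat R S2" and "iso_closed R S2" and "contains_zero R S2"
    and "closed_ext R (ext_cat R S1 S2)"
    and "closed_quot R (S_sub R a (ext_cat R S2 S1))"
  shows "(\<forall>M. S_sub R a (ext_cat R S2 S1) M \<longrightarrow> S_sub R a (ext_cat R S1 S2) M)
     \<and> (satisfies_C R a (ext_cat R S2 S1) \<longrightarrow> satisfies_C R a (ext_cat R S1 S2))"
proof -
  interpret R: cring R by fact
  have ac: "a \<subseteq> carrier R" using ideal.Icarr[OF assms(3)] by auto
  obtain G where G: "G \<subseteq> carrier R" "finite G" "a = Idl\<^bsub>R\<^esub> G"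
    using noetherian_ring.finetely_gen[OF assms(2) assms(3)] by auto
  have Ga: "G \<subseteq> a" using R.genideal_self[OF G(1)] G(3) by simp
  have S12: "\<And>X. ext_cat R (ext_cat R S1 S2) (ext_cat R S1 S2) X \<Longrightarrow> ext_cat R S1 S2 X"
    using assms(8) unfolding closed_ext_def by simp
  have cs: "\<And>A B h. module R A \<Longrightarrow> module R B \<Longrightarrow> mod_hom R B A h \<Longrightarrow> inj_on h (carrier B) \<Longrightarrow> S1 A \<Longrightarrow> S1 B"
    using assms(4) unfolding serre_def closed_sub_def by blast
  have cq: "\<And>A B h. module R A \<Longrightarrow> module R B \<Longrightarrow> mod_hom R A B h \<Longrightarrow> h ` carrier A = carrier B \<Longrightarrow> S_sub R a (ext_cat R S2 S1) A \<Longrightarrow> S_sub R a (ext_cat R S2 S1) B"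
    using assms(9) unfolding closed_quot_def by blast
  have ic: "\<And>A B h. module R A \<Longrightarrow> module R B \<Longrightarrow> mod_hom R A B h \<Longrightarrow> bij_betw h (carrier A) (carrier B) \<Longrightarrow> S2 A \<Longrightarrow> S2 B"
    using assms(6) unfolding iso_closed_def by blast
  have main: "S_sub R a (ext_cat R S1 S2) M" if hM: "S_sub R a (ext_cat R S2 S1) M" for M
  proof -
    have M: "module R M" and cM: "cond_C R a (ext_cat R S2 S1) M" using hM by (auto simp: S_sub_def)
    interpret module R M by fact
    show "S_sub R a (ext_cat R S1 S2) M" unfolding S_sub_def cond_C_def
    proof (intro conjI impI)
      show "module R M" by fact
      assume tor: "torsion R a M = carrier M \<and> ext_cat R S1 S2 (annih_sub R a M)"
      define C0 where "C0 = {m \<in> carrier M. \<forall>s\<in>a. s \<odot>\<^bsub>M\<^esub> m = \<zero>\<^bsub>M\<^esub>}"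
      have C0s: "submodule C0 R M" unfolding C0_def using D_sub[OF M carrier_is_submodule ac] .
      have A: "annih_sub R a M = M\<lparr>carrier := C0\<rparr>" by (simp add: annih_sub_def C0_def)
      have E: "ext_cat R S1 S2 (M\<lparr>carrier := C0\<rparr>)" using tor A by simp
      obtain L N f g where LN0: "module R L" "module R N" "mod_hom R L (M\<lparr>carrier := C0\<rparr>) f"
        "inj_on f (carrier L)" "mod_hom R (M\<lparr>carrier := C0\<rparr>) N g" "g ` carrier (M\<lparr>carrier := C0\<rparr>) = carrier N"
        "f ` carrier L = {x \<in> carrier (M\<lparr>carrier := C0\<rparr>). g x = \<zero>\<^bsub>N\<^esub>}" "S1 L" "S2 N"
        using E unfolding ext_cat_def by blast
      have LN: "module R L" "module R N" "mod_hom R L (M\<lparr>carrier := C0\<rparr>) f"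
        "inj_on f (carrier L)" "mod_hom R (M\<lparr>carrier := C0\<rparr>) N g" "g ` C0 = carrier N"
        "f ` carrier L = {x \<in> C0. g x = \<zero>\<^bsub>N\<^esub>}" "S1 L" "S2 N"
        using LN0 by simp_all
      define K where "K = f ` carrier L"
      have C0c: "C0 \<subseteq> carrier M" by (auto simp: C0_def)
      have fM: "mod_hom R L M f" using LN(3) C0c by (auto simp: mod_hom_def)
      have Ks: "submodule K R M" unfolding K_def using hom_image_sub[OF LN(1) M fM] .
      have KC0: "K \<subseteq> C0" using LN(7) K_def by auto
      have Kker: "K = {x \<in> C0. g x = \<zero>\<^bsub>N\<^esub>}" using LN(7) K_def by simp
      have Km: "module R (M\<lparr>carrier := K\<rparr>)" using submodule.submodule_is_module[OF Ks M] .
      have fK: "mod_hom R L (M\<lparr>carrier := K\<rparr>) f" using LN(3) by (auto simp: mod_hom_def K_def)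
      have fKb: "bij_betw f (carrier L) (carrier (M\<lparr>carrier := K\<rparr>))" using LN(4) by (simp add: bij_betw_def K_def)
      have SK: "S1 (M\<lparr>carrier := K\<rparr>)"
        using cs[OF LN(1) Km _ _ LN(8)] hom_inv[OF LN(1) Km fK fKb] unfolding bij_betw_def by blast
      define T where "T = {m \<in> carrier M. \<forall>r\<in>a. r \<odot>\<^bsub>M\<^esub> m \<in> K}"
      have Ts: "submodule T R M" unfolding T_def using T_sub[OF M Ks ac] .
      have C0T: "C0 \<subseteq> T" using sub_props(2)[OF Ks] by (auto simp: C0_def T_def)
      define M' where "M' = Qs M K (carrier M)"
      have KM: "K \<subseteq> carrier M" using sub_props(1)[OF Ks] .
      have M'm: "module R M'" unfolding M'_def using Qs_module[OF Ks carrier_is_submodule KM] .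
      have rhom: "mod_hom R M M' (rep M K)" unfolding M'_def mod_hom_def
        by (auto simp: Qs_simps rep_addL[OF Ks] rep_addR[OF Ks] rep_smult[OF Ks] rep_carrier[OF Ks])
      have rsurj: "rep M K ` carrier M = carrier M'" by (simp add: M'_def Qs_simps)
      have rker: "f ` carrier L = {x \<in> carrier M. rep M K x = \<zero>\<^bsub>M'\<^esub>}"
        using rep_zero_iff[OF Ks] KM by (auto simp: M'_def Qs_simps K_def)
      have M'S: "S_sub R a (ext_cat R S2 S1) M'"
        using cq[OF M M'm rhom rsurj hM] .
      have torM': "torsion R a M' = carrier M'"
      proof
        show "torsion R a M' \<subseteq> carrier M'" unfolding torsion_def by blast
        show "carrier M' \<subseteq> torsion R a M'"
        proof
          fix y assume y: "y \<in> carrier M'"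
          then obtain x where x: "x \<in> carrier M" "y = rep M K x" by (auto simp: M'_def Qs_simps)
          then have "x \<in> torsion R a M" using tor by simp
          then obtain n where n: "\<forall>r \<in> ideal_pow R a n. r \<odot>\<^bsub>M\<^esub> x = \<zero>\<^bsub>M\<^esub>" unfolding torsion_def by blast
          have ip: "ideal_pow R a n \<subseteq> carrier R" using ideal.Icarr[OF ideal_pow_ideal[OF assms(1,3), of n]] by blast
          have "\<forall>r \<in> ideal_pow R a n. r \<odot>\<^bsub>M'\<^esub> y = \<zero>\<^bsub>M'\<^esub>"
            using n ip x by (auto simp: M'_def Qs_simps rep_smult[OF Ks] rep_zero[OF Ks])
          then show "y \<in> torsion R a M'" using y by (auto simp: torsion_def)
        qed
      qed
      have annM': "annih_sub R a M' = Qs M K T"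
      proof -
        have "{x \<in> carrier M'. \<forall>r\<in>a. r \<odot>\<^bsub>M'\<^esub> x = \<zero>\<^bsub>M'\<^esub>} = rep M K ` T"
        proof (intro equalityI subsetI)
          fix y assume "y \<in> {x \<in> carrier M'. \<forall>r\<in>a. r \<odot>\<^bsub>M'\<^esub> x = \<zero>\<^bsub>M'\<^esub>}"
          then obtain x where x: "x \<in> carrier M" "y = rep M K x"
            and h: "\<forall>r\<in>a. rep M K (r \<odot>\<^bsub>M\<^esub> rep M K x) = \<zero>\<^bsub>M\<^esub>" by (auto simp: M'_def Qs_simps)
          have "\<forall>r\<in>a. r \<odot>\<^bsub>M\<^esub> x \<in> K"
          proof
            fix r assume r: "r \<in> a"
            then have rc: "r \<in> carrier R" using ac by auto
            have "rep M K (r \<odot>\<^bsub>M\<^esub> x) = \<zero>\<^bsub>M\<^esub>" using h r rep_smult[OF Ks rc x(1)] by simp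
            then show "r \<odot>\<^bsub>M\<^esub> x \<in> K" using rep_zero_iff[OF Ks] rc x by simp
          qed
          then show "y \<in> rep M K ` T" using x T_def by auto
        next
          fix y assume "y \<in> rep M K ` T"
          then obtain x where x: "x \<in> T" "y = rep M K x" by auto
          have xc: "x \<in> carrier M" using x T_def by auto
          have "\<forall>r\<in>a. r \<odot>\<^bsub>M'\<^esub> y = \<zero>\<^bsub>M'\<^esub>"
          proof
            fix r assume r: "r \<in> a"
            then have rc: "r \<in> carrier R" using ac by auto
            have "r \<odot>\<^bsub>M\<^esub> x \<in> K" using x r T_def by auto
            then show "r \<odot>\<^bsub>M'\<^esub> y = \<zero>\<^bsub>M'\<^esub>"
              using rep_smult[OF Ks rc xc] x rc xc by (simp add: M'_def Qs_simps rep_zero_iff[OF Ks])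
          qed
          moreover have "y \<in> carrier M'" using x xc by (simp add: M'_def Qs_simps)
          ultimately show "y \<in> {x \<in> carrier M'. \<forall>r\<in>a. r \<odot>\<^bsub>M'\<^esub> x = \<zero>\<^bsub>M'\<^esub>}" by simp
        qed
        then show ?thesis by (simp add: annih_sub_def M'_def Qs_def)
      qed
      have iso: "mod_hom R (Qs M K C0) N g \<and> bij_betw g (carrier (Qs M K C0)) (carrier N)"
        using Qs_iso[OF M Ks C0s KC0 LN(2) LN(5) LN(6) Kker] .
      have Qm1: "module R (Qs M K C0)" using Qs_module[OF Ks C0s KC0] .
      have S2Q: "S2 (Qs M K C0)"
        using ic[OF LN(2) Qm1 _ _ LN(9)] hom_inv[OF Qm1 LN(2)] iso by blast
      have hyp: "\<forall>r\<in>G. \<forall>m\<in>T. r \<odot>\<^bsub>M\<^esub> m \<in> K" using Ga by (auto simp: T_def)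
      have f1: "S1 (Qs M {m \<in> T. \<forall>s\<in>G. s \<odot>\<^bsub>M\<^esub> m = \<zero>\<^bsub>M\<^esub>} T)"
        using filt[OF M assms(4) LN(8) Ks SK Ts G(1) hyp G(2) subset_refl] .
      have DG: "{m \<in> T. \<forall>s\<in>G. s \<odot>\<^bsub>M\<^esub> m = \<zero>\<^bsub>M\<^esub>} = C0"
      proof
        show "{m \<in> T. \<forall>s\<in>G. s \<odot>\<^bsub>M\<^esub> m = \<zero>\<^bsub>M\<^esub>} \<subseteq> C0"
          using ann_gen[OF M _ G(1)] G(3) by (auto simp: C0_def T_def)
        show "C0 \<subseteq> {m \<in> T. \<forall>s\<in>G. s \<odot>\<^bsub>M\<^esub> m = \<zero>\<^bsub>M\<^esub>}" using C0T Ga by (auto simp: C0_def)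
      qed
      have S1Q: "S1 (Qs M C0 T)" using f1 DG by simp
      have e21: "ext_cat R S2 S1 (Qs M K T)"
        using Qs_ext[OF M Ks C0s Ts KC0 C0T, of S2 S1] S2Q S1Q by blast
      have M'21: "ext_cat R S2 S1 M'" using M'S torM' annM' e21 by (auto simp: S_sub_def cond_C_def)
      have zS1: "\<And>Z. module R Z \<Longrightarrow> carrier Z = {\<zero>\<^bsub>Z\<^esub>} \<Longrightarrow> S1 Z"
        using zero_in_serre[OF assms(4) LN(8)] by blast
      have M'12: "ext_cat R S1 S2 M'"
      proof -
        from M'21 obtain X Y f' g' where XY: "module R X" "module R Y" "mod_hom R X M' f'"
          "inj_on f' (carrier X)" "mod_hom R M' Y g'" "g' ` carrier M' = carrier Y"
          "f' ` carrier X = {x \<in> carrier M'. g' x = \<zero>\<^bsub>Y\<^esub>}" "S2 X" "S1 Y"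
          unfolding ext_cat_def by blast
        have "ext_cat R (ext_cat R S1 S2) (ext_cat R S1 S2) M'"
          using ext_catI[OF M'm XY(1-7)] S2_in_ext[where S=S1 and S'=S2, OF XY(1) XY(8) zS1] S1_in_ext[where S=S1 and S'=S2, OF XY(2) XY(9) assms(7)]
          by blast
        then show ?thesis using S12 by blast
      qed
      have "ext_cat R (ext_cat R S1 S2) (ext_cat R S1 S2) M"
        using ext_catI[OF M LN(1) M'm fM LN(4) rhom rsurj rker] S1_in_ext[where S=S1 and S'=S2, OF LN(1) LN(8) assms(7)] M'12
        by blast
      then show "ext_cat R S1 S2 M" using S12 by blast
    qed
  qed
  show ?thesis
  proof (intro conjI allI impI)
    fix M assume "S_sub R a (ext_cat R S2 S1) M"
    then show "S_sub R a (ext_cat R S1 S2) M" using main by blast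
  next
    assume sat: "satisfies_C R a (ext_cat R S2 S1)"
    show "satisfies_C R a (ext_cat R S1 S2)" unfolding satisfies_C_def
    proof (intro allI impI)
      fix M :: "('r,'m) module" assume "module R M"
      then have "S_sub R a (ext_cat R S2 S1) M" using sat by (simp add: satisfies_C_def S_sub_def)
      then show "cond_C R a (ext_cat R S1 S2) M" using main by (simp add: S_sub_def)
    qed
  qed
qed

end
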